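(* Let $(S,\mathcal{S})$ be a measurable space and let $\mathcal{E}\subseteq\mathcal{P}(S)$ be a $\cap$-stable collection with $\sigma(\mathcal{E})=\mathcal{S}$, $\emptyset\in\mathcal{E}$ and $\mathcal{E}\subseteq (\mathcal{E}_{int})_{\sigma}$. If $\pi$ is a constructive cr-set, then \[ T_{\pi}(A)=\sup\{ T_{\pi}(F)\mid F\in\mathcal{E}_{int},\,F\subseteq A\}\quad\text{for all } A\in\mathcal{S}.\]
   Context: $(\Omega,\mathcal{F},P)$ is a probability space; $C(S)$ is the set of countable subsets of $S$; $N_A(M)=|A\cap M|$; $\mathcal{C}(\mathcal{S})=\sigma(N_A\mid A\in\mathcal{S})$; a cr-set is an $\mathcal{F}$-$\mathcal{C}(\mathcal{S})$ measurable map $\pi:\Omega\to C(S)$, finite if its values are finite; a map $\tau:\Omega\to C(S)$ is constructive if $\tau(\omega)=\bigcup_k\pi_k(\omega)$ for all $\omega$ for some finite cr-sets $\pi_k$, $k\in\mathbb{N}$. The hitting function is $T_\pi(A)=P(\pi\cap A\neq\emptyset)$, $A\in\mathcal{S}$. For a nonempty family $\mathcal{E}$: $\mathcal{E}_\sigma$ is the family of countable unions of $\mathcal{E}$-sets (empty union not included); $\mathcal{E}_{int}=\{\bigcap_n (S\setminus E_n)\mid E_n\in\mathcal{E}\}$. *)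

theory Defs
  imports "HOL-Probability.Probability"
begin

definition countable_subsets :: "'a set \<Rightarrow> 'a set set" where
  "countable_subsets S = {X. X \<subseteq> S \<and> countable X}"

definition count_in :: "'a set \<Rightarrow> 'a set \<Rightarrow> enat" where
  "count_in A X = (if finite (A \<inter> X) then enat (card (A \<inter> X)) else \<infinity>)"

text \<open>The measurable space (C(S), C(\<S>)) with C(\<S>) = sigma(N_A | A in \<S>).\<close>
definition C_sigma :: "'a measure \<Rightarrow> 'a set measure" where
  "C_sigma M = sigma (countable_subsets (space M))
     {{X \<in> countable_subsets (space M). count_in A X \<in> B} | A B. A \<in> sets M}"

definition cr_set :: "'w measure \<Rightarrow> 'a measure \<Rightarrow> ('w \<Rightarrow> 'a set) \<Rightarrow> bool" where
  "cr_set P M \<pi> \<longleftrightarrow> \<pi> \<in> measurable P (C_sigma M)"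

definition finite_cr_set :: "'w measure \<Rightarrow> 'a measure \<Rightarrow> ('w \<Rightarrow> 'a set) \<Rightarrow> bool" where
  "finite_cr_set P M \<pi> \<longleftrightarrow> cr_set P M \<pi> \<and> (\<forall>\<omega>\<in>space P. finite (\<pi> \<omega>))"

definition constructive :: "'w measure \<Rightarrow> 'a measure \<Rightarrow> ('w \<Rightarrow> 'a set) \<Rightarrow> bool" where
  "constructive P M \<tau> \<longleftrightarrow>
     (\<forall>\<omega>\<in>space P. \<tau> \<omega> \<in> countable_subsets (space M)) \<and>
     (\<exists>\<pi>s :: nat \<Rightarrow> 'w \<Rightarrow> 'a set. (\<forall>k. finite_cr_set P M (\<pi>s k)) \<and>
        (\<forall>\<omega>\<in>space P. \<tau> \<omega> = (\<Union>k. \<pi>s k \<omega>)))"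

definition hitting :: "'w measure \<Rightarrow> ('w \<Rightarrow> 'a set) \<Rightarrow> 'a set \<Rightarrow> real" where
  "hitting P \<pi> A = measure P {\<omega> \<in> space P. \<pi> \<omega> \<inter> A \<noteq> {}}"

definition sigma_family :: "'a set set \<Rightarrow> 'a set set" where
  "sigma_family E = {\<Union>n. G n | G :: nat \<Rightarrow> 'a set. \<forall>n. G n \<in> E}"

definition int_family :: "'a set \<Rightarrow> 'a set set \<Rightarrow> 'a set set" where
  "int_family S E = {\<Inter>n. S - G n | G :: nat \<Rightarrow> 'a set. \<forall>n. G n \<in> E}"

end

theory Submission
  imports Defs
begin
lemma int_familyE:
  assumes "F \<in> int_family S E"
  obtains G :: "nat \<Rightarrow> 'a set" where "\<And>n. G n \<in> E" "F = (\<Inter>n. S - G n)"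
  using assms unfolding int_family_def by blast

lemma int_familyI: "(\<And>n::nat. G n \<in> E) \<Longrightarrow> F = (\<Inter>n. S - G n) \<Longrightarrow> F \<in> int_family S E"
  unfolding int_family_def by blast

lemma sigma_familyE:
  assumes "F \<in> sigma_family E"
  obtains G :: "nat \<Rightarrow> 'a set" where "\<And>n. G n \<in> E" "F = (\<Union>n. G n)"
  using assms unfolding sigma_family_def by blast

lemma int_family_sets:
  assumes "E \<subseteq> sets M" "F \<in> int_family (space M) E"
  shows "F \<in> sets M"
proof -
  obtain G :: "nat \<Rightarrow> 'a set" where G: "\<And>n. G n \<in> E" "F = (\<Inter>n. space M - G n)"
    using int_familyE[OF assms(2)] by blast
  have "F = space M - (\<Union>n. G n)" using G(2) by auto
  moreover have "(\<Union>n. G n) \<in> sets M" using G(1) assms(1) by blast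
  ultimately show ?thesis by auto
qed

lemma int_family_sub: "F \<in> int_family S E \<Longrightarrow> F \<subseteq> S"
  by (erule int_familyE) auto

lemma int_family_INT:
  assumes "\<And>i::nat. F i \<in> int_family S E"
  shows "(\<Inter>i. F i) \<in> int_family S E"
proof -
  have "\<forall>i. \<exists>G::nat \<Rightarrow> _. (\<forall>n. G n \<in> E) \<and> F i = (\<Inter>n. S - G n)"
    using assms by (metis int_familyE)
  then obtain G :: "nat \<Rightarrow> nat \<Rightarrow> _" where G: "\<And>i n. G i n \<in> E" "\<And>i. F i = (\<Inter>n. S - G i n)"
    by metis
  define H where "H k = (case prod_decode k of (i, n) \<Rightarrow> G i n)" for k
  have "\<And>k. H k \<in> E" unfolding H_def using G(1) by (simp split: prod.split)
  moreover have "(\<Inter>i. F i) = (\<Inter>k. S - H k)"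
  proof
    show "(\<Inter>i. F i) \<subseteq> (\<Inter>k. S - H k)"
      unfolding H_def G(2) by (auto split: prod.split)
    show "(\<Inter>k. S - H k) \<subseteq> (\<Inter>i. F i)"
    proof
      fix x assume x: "x \<in> (\<Inter>k. S - H k)"
      { fix i n
        have "x \<in> S - H (prod_encode (i, n))" using x by blast
        hence "x \<in> S - G i n" unfolding H_def by simp }
      thus "x \<in> (\<Inter>i. F i)" unfolding G(2) by blast
    qed
  qed
  ultimately show ?thesis by (rule int_familyI)
qed

lemma int_family_Un:
  assumes Eint: "\<And>A B. A \<in> E \<Longrightarrow> B \<in> E \<Longrightarrow> A \<inter> B \<in> E"
    and "F1 \<in> int_family S E" "F2 \<in> int_family S E"
  shows "F1 \<union> F2 \<in> int_family S E"
proof -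
  obtain G :: "nat \<Rightarrow> 'a set" where G: "\<And>n. G n \<in> E" "F1 = (\<Inter>n. S - G n)"
    using int_familyE[OF assms(2)] by blast
  obtain K :: "nat \<Rightarrow> 'a set" where K: "\<And>n. K n \<in> E" "F2 = (\<Inter>n. S - K n)"
    using int_familyE[OF assms(3)] by blast
  define H where "H k = (case prod_decode k of (i, n) \<Rightarrow> G i \<inter> K n)" for k
  have "\<And>k. H k \<in> E" unfolding H_def using G(1) K(1) Eint by (simp split: prod.split)
  moreover have "F1 \<union> F2 = (\<Inter>k. S - H k)"
  proof
    show "F1 \<union> F2 \<subseteq> (\<Inter>k. S - H k)"
      unfolding H_def G(2) K(2) by (auto split: prod.split)
    show "(\<Inter>k. S - H k) \<subseteq> F1 \<union> F2"
    proof
      fix x assume x: "x \<in> (\<Inter>k. S - H k)"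
      { fix i n
        have "x \<in> S - H (prod_encode (i, n))" using x by blast
        hence "x \<in> S - (G i \<inter> K n)" unfolding H_def by simp }
      note * = this
      show "x \<in> F1 \<union> F2"
      proof (cases "x \<in> F1")
        case False
        then obtain i where "x \<in> G i" using * unfolding G(2) by blast
        thus ?thesis using * unfolding K(2) by blast
      qed simp
    qed
  qed
  ultimately show ?thesis by (rule int_familyI)
qed

lemma int_family_UN_atMost:
  assumes Eint: "\<And>A B. A \<in> E \<Longrightarrow> B \<in> E \<Longrightarrow> A \<inter> B \<in> E"
    and "\<And>i. i \<le> N \<Longrightarrow> F i \<in> int_family S E"
  shows "(\<Union>i\<le>(N::nat). F i) \<in> int_family S E"
  using assms(2)
proof (induction N)
  case 0 thus ?case by simp
next
  case (Suc N)
  have "(\<Union>i\<le>Suc N. F i) = (\<Union>i\<le>N. F i) \<union> F (Suc N)"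
    by (auto simp: atMost_Suc)
  thus ?case using Suc int_family_Un[OF Eint] by simp
qed

lemma int_family_compl: "G \<in> E \<Longrightarrow> S - G \<in> int_family S E"
  by (rule int_familyI[of "\<lambda>_. G"]) auto

lemma int_family_space: "{} \<in> E \<Longrightarrow> S \<in> int_family S E"
  using int_family_compl[of "{}" E S] by simp

lemma int_family_empty:
  assumes "{} \<in> E" "E \<subseteq> sigma_family (int_family S E)"
  shows "{} \<in> int_family S E"
proof -
  obtain G :: "nat \<Rightarrow> 'a set" where "\<And>n. G n \<in> int_family S E" "{} = (\<Union>n. G n)"
    using assms by (meson sigma_familyE subsetD)
  hence "G 0 = {}" by auto
  thus ?thesis using \<open>\<And>n. G n \<in> int_family S E\<close> by metis
qed

lemma finite_escape:
  assumes "finite X" "\<forall>x\<in>X. \<exists>n. x \<notin> D n" "decseq D"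
  shows "\<exists>N. X \<inter> D N = {}"
  using assms(1,2)
proof (induction X rule: finite_induct)
  case empty thus ?case by simp
next
  case (insert x X)
  then obtain N1 where N1: "X \<inter> D N1 = {}" by blast
  obtain n where n: "x \<notin> D n" using insert by blast
  have "D (max N1 n) \<subseteq> D N1" "D (max N1 n) \<subseteq> D n"
    using assms(3) unfolding decseq_def by auto
  thus ?case using N1 n by blast
qed

definition evt :: "'w measure \<Rightarrow> ('w \<Rightarrow> 'a set) \<Rightarrow> 'a set \<Rightarrow> 'w set" where
  "evt P f X = {\<omega>\<in>space P. f \<omega> \<inter> X \<noteq> {}}"

lemma evt_mono: "X \<subseteq> Y \<Longrightarrow> evt P f X \<subseteq> evt P f Y"
  unfolding evt_def by auto

lemma evt_Un: "evt P f (X \<union> Y) = evt P f X \<union> evt P f Y"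
  unfolding evt_def by auto

lemma evt_UN: "evt P f (\<Union>i. X i) = (\<Union>i. evt P f (X i))"
  unfolding evt_def by auto

lemma evt_empty: "evt P f {} = {}"
  unfolding evt_def by auto

locale setting =
  fixes P :: "'w measure" and M :: "'a measure" and f :: "'w \<Rightarrow> 'a set"
  assumes prob: "prob_space P"
    and fin: "\<And>\<omega>. \<omega> \<in> space P \<Longrightarrow> finite (f \<omega>)"
    and meas: "\<And>B. B \<in> sets M \<Longrightarrow> evt P f B \<in> sets P"
begin

interpretation prob_space P by (rule prob)

lemma h_mono: "X \<subseteq> Y \<Longrightarrow> Y \<in> sets M \<Longrightarrow> measure P (evt P f X) \<le> measure P (evt P f Y)"
  by (intro finite_measure_mono evt_mono meas)

lemma h_Un: "X \<in> sets M \<Longrightarrow> Y \<in> sets M \<Longrightarrow>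
   measure P (evt P f (X \<union> Y)) \<le> measure P (evt P f X) + measure P (evt P f Y)"
  unfolding evt_Un by (intro measure_Un_le meas)

lemma h_UN:
  assumes "\<And>i. X i \<in> sets M" "\<And>i. measure P (evt P f (X i)) \<le> d i" "summable d"
  shows "measure P (evt P f (\<Union>i. X i)) \<le> suminf d"
proof -
  have s: "summable (\<lambda>i. measure P (evt P f (X i)))"
    by (rule summable_comparison_test[OF _ assms(3)]) (use assms(2) in auto)
  have "measure P (evt P f (\<Union>i. X i)) \<le> (\<Sum>i. measure P (evt P f (X i)))"
    unfolding evt_UN using assms(1) meas s by (intro finite_measure_subadditive_countably) auto
  also have "\<dots> \<le> suminf d" by (rule suminf_le[OF assms(2) s assms(3)])
  finally show ?thesis .
qed

lemma h_dec:
  assumes "\<And>n. D n \<in> sets M" "decseq D" "(\<Inter>n. D n) = {}" "e > 0"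
  shows "\<exists>N. measure P (evt P f (D N)) < e"
proof -
  have "(\<lambda>n. measure P (evt P f (D n))) \<longlonglongrightarrow> measure P (\<Inter>n. evt P f (D n))"
  proof (rule finite_Lim_measure_decseq)
    show "range (\<lambda>n. evt P f (D n)) \<subseteq> events" using assms(1) meas by auto
    show "decseq (\<lambda>n. evt P f (D n))" using assms(2) unfolding decseq_def by (meson evt_mono)
  qed
  moreover have "(\<Inter>n. evt P f (D n)) = {}"
  proof (rule ccontr)
    assume "(\<Inter>n. evt P f (D n)) \<noteq> {}"
    then obtain \<omega> where w: "\<omega> \<in> space P" "\<And>n. f \<omega> \<inter> D n \<noteq> {}" unfolding evt_def by auto
    have "\<forall>x\<in>f \<omega>. \<exists>n. x \<notin> D n" using assms(3) by auto
    then obtain N where "f \<omega> \<inter> D N = {}" using finite_escape[OF fin[OF w(1)] _ assms(2)] by blast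
    with w(2) show False by blast
  qed
  ultimately have "(\<lambda>n. measure P (evt P f (D n))) \<longlonglongrightarrow> 0" by simp
  from order_tendstoD(2)[OF this assms(4)] show ?thesis
    by (auto simp: eventually_sequentially)
qed
end
definition approx :: "'w measure \<Rightarrow> ('w \<Rightarrow> 'a set) \<Rightarrow> 'a set \<Rightarrow> 'a set set \<Rightarrow> 'a set \<Rightarrow> bool" where
  "approx P f S E X \<longleftrightarrow> (\<forall>e>0. \<exists>F\<in>int_family S E. F \<subseteq> X \<and> measure P (evt P f (X - F)) < e)"

lemma (in setting) inner:
  assumes EP: "E \<subseteq> Pow (space M)"
    and Eint: "\<And>A B. A \<in> E \<Longrightarrow> B \<in> E \<Longrightarrow> A \<inter> B \<in> E"
    and Esig_eq: "sigma_sets (space M) E = sets M"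
    and Eempty: "{} \<in> E"
    and Esig: "E \<subseteq> sigma_family (int_family (space M) E)"
    and A: "A \<in> sigma_sets (space M) E"
  shows "approx P f (space M) E A \<and> approx P f (space M) E (space M - A)"
  using A
proof (induction rule: sigma_sets.induct)
  have Esub: "E \<subseteq> sets M" using Esig_eq sigma_sets.Basic by blast
  have intsets: "\<And>F. F \<in> int_family (space M) E \<Longrightarrow> F \<in> sets M"
    using int_family_sets[OF Esub] by blast
  {
  case (Basic a)
  have aM: "a \<in> sets M" using Basic Esub by blast
  have aS: "a \<in> sigma_family (int_family (space M) E)" using Basic Esig by blast
  obtain Fn :: "nat \<Rightarrow> 'a set" where Fn: "\<And>n. Fn n \<in> int_family (space M) E" "a = (\<Union>n. Fn n)"
    using sigma_familyE[OF aS] by blast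
  have "approx P f (space M) E a"
    unfolding approx_def
  proof (intro allI impI)
    fix e :: real assume e: "e > 0"
    define D where "D N = a - (\<Union>i\<le>N. Fn i)" for N
    have FnM: "\<And>i. Fn i \<in> sets M" using intsets Fn(1) by blast
    have DM: "\<And>N. D N \<in> sets M" unfolding D_def using aM FnM by (intro sets.Diff sets.finite_UN) auto
    have dec: "decseq D" unfolding decseq_def
    proof (intro allI impI)
      fix m n :: nat assume "m \<le> n"
      thus "D n \<subseteq> D m" unfolding D_def by auto
    qed
    have emp: "(\<Inter>N. D N) = {}"
    proof -
      { fix x assume x: "x \<in> (\<Inter>N. D N)"
        hence "x \<in> D 0" by blast
        hence "x \<in> a" unfolding D_def by blast
        then obtain n where n: "x \<in> Fn n" using Fn(2) by blast
        have "x \<in> D n" using x by blast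
        hence False using n unfolding D_def by blast }
      thus ?thesis by blast
    qed
    obtain N where N: "measure P (evt P f (D N)) < e" using h_dec[OF DM dec emp e] by blast
    have Fin: "(\<Union>i\<le>N. Fn i) \<in> int_family (space M) E"
      by (rule int_family_UN_atMost) (use Eint Fn(1) in auto)
    have sub: "(\<Union>i\<le>N. Fn i) \<subseteq> a" using Fn(2) by blast
    show "\<exists>F\<in>int_family (space M) E. F \<subseteq> a \<and> measure P (evt P f (a - F)) < e"
      by (rule bexI[OF _ Fin]) (use sub N in \<open>simp add: D_def\<close>)
  qed
  moreover have "approx P f (space M) E (space M - a)"
    unfolding approx_def
  proof (intro allI impI)
    fix e :: real assume e: "e > 0"
    show "\<exists>F\<in>int_family (space M) E. F \<subseteq> space M - a \<and> measure P (evt P f (space M - a - F)) < e"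
      by (rule bexI[of _ "space M - a"]) (use e int_family_compl[OF Basic, of "space M"] in \<open>simp_all add: evt_empty\<close>)
  qed
  ultimately show ?case by blast
  next
  case Empty
  show ?case unfolding approx_def
    using int_family_empty[OF Eempty Esig] int_family_space[OF Eempty, of "space M"]
    by (auto simp: evt_empty intro!: bexI[of _ "{}"] bexI[of _ "space M"])
  next
  case (Compl a)
  have "a \<subseteq> space M" using sigma_sets_into_sp[OF EP Compl(1)] .
  hence "space M - (space M - a) = a" by blast
  thus ?case using Compl(2) by simp
  next
  case (Union A)
  have AM: "\<And>i. A i \<in> sets M" using Union(1) Esig_eq by blast
  have "approx P f (space M) E (\<Union>(range A))
      \<and> approx P f (space M) E (space M - \<Union>(range A))"
    unfolding approx_def
  proof (intro conjI allI impI)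
    fix e :: real assume e: "e > 0"
    define d where "d i = e / 4 * (1/2)^i" for i :: nat
    have dpos: "\<And>i. d i > 0" unfolding d_def using e by simp
    have gs: "summable (\<lambda>i::nat. (1/2::real)^i)" by (rule summable_geometric) simp
    have ds: "summable d" unfolding d_def by (rule summable_mult[OF gs])
    have "suminf d = e / 4 * (\<Sum>i. (1/2::real)^i)" unfolding d_def by (rule suminf_mult[OF gs])
    also have "(\<Sum>i. (1/2::real)^i) = 2" using suminf_geometric[of "1/2::real"] by simp
    finally have dsum: "suminf d = e / 2" by simp
    have "\<forall>i. \<exists>F. F \<in> int_family (space M) E \<and> F \<subseteq> A i \<and> measure P (evt P f (A i - F)) < d i"
      using Union(2) dpos unfolding approx_def by blast
    then obtain Fa where Fa: "\<And>i. Fa i \<in> int_family (space M) E" "\<And>i. Fa i \<subseteq> A i"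
      "\<And>i. measure P (evt P f (A i - Fa i)) < d i" by metis
    have "\<forall>i. \<exists>F. F \<in> int_family (space M) E \<and> F \<subseteq> space M - A i
        \<and> measure P (evt P f ((space M - A i) - F)) < d i"
      using Union(2) dpos unfolding approx_def by blast
    then obtain Ka where Ka: "\<And>i. Ka i \<in> int_family (space M) E" "\<And>i. Ka i \<subseteq> space M - A i"
      "\<And>i. measure P (evt P f ((space M - A i) - Ka i)) < d i" by metis
    define D where "D N = (\<Union>(range A)) - (\<Union>i\<le>N. A i)" for N
    have DM: "\<And>N. D N \<in> sets M" unfolding D_def using AM by auto
    moreover have "decseq D" unfolding D_def decseq_def by auto
    moreover have "(\<Inter>N. D N) = {}" unfolding D_def by auto
    moreover have "e / 2 > 0" using e by simp
    ultimately obtain N where N: "measure P (evt P f (D N)) < e / 2" using h_dec by blast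
    let ?G = "\<Union>i\<le>N. Fa i"
    have Gint: "?G \<in> int_family (space M) E"
      by (rule int_family_UN_atMost) (use Eint Fa(1) in auto)
    have Gsub: "?G \<subseteq> \<Union>(range A)" using Fa(2) by blast
    have UM: "(\<Union>i. A i - Fa i) \<in> sets M" using AM intsets Fa(1) by blast
    have "\<Union>(range A) - ?G \<subseteq> D N \<union> (\<Union>i. A i - Fa i)" unfolding D_def by blast
    hence "measure P (evt P f (\<Union>(range A) - ?G)) \<le> measure P (evt P f (D N \<union> (\<Union>i. A i - Fa i)))"
      using DM UM by (intro h_mono) auto
    also have "\<dots> \<le> measure P (evt P f (D N)) + measure P (evt P f (\<Union>i. A i - Fa i))"
      using DM UM by (rule h_Un)
    also have "measure P (evt P f (\<Union>i. A i - Fa i)) \<le> suminf d"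
      using AM intsets Fa(1,3) ds by (intro h_UN) (auto intro: less_imp_le)
    finally have "measure P (evt P f (\<Union>(range A) - ?G)) < e"
      using N dsum by simp
    thus "\<exists>F\<in>int_family (space M) E. F \<subseteq> \<Union>(range A) \<and> measure P (evt P f (\<Union>(range A) - F)) < e"
      using Gint Gsub by blast
  next
    fix e :: real assume e: "e > 0"
    define d where "d i = e / 4 * (1/2)^i" for i :: nat
    have dpos: "\<And>i. d i > 0" unfolding d_def using e by simp
    have gs: "summable (\<lambda>i::nat. (1/2::real)^i)" by (rule summable_geometric) simp
    have ds: "summable d" unfolding d_def by (rule summable_mult[OF gs])
    have "suminf d = e / 4 * (\<Sum>i. (1/2::real)^i)" unfolding d_def by (rule suminf_mult[OF gs])
    also have "(\<Sum>i. (1/2::real)^i) = 2" using suminf_geometric[of "1/2::real"] by simp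
    finally have dsum: "suminf d = e / 2" by simp
    have "\<forall>i. \<exists>F. F \<in> int_family (space M) E \<and> F \<subseteq> space M - A i
        \<and> measure P (evt P f ((space M - A i) - F)) < d i"
      using Union(2) dpos unfolding approx_def by blast
    then obtain Ka where Ka: "\<And>i. Ka i \<in> int_family (space M) E" "\<And>i. Ka i \<subseteq> space M - A i"
      "\<And>i. measure P (evt P f ((space M - A i) - Ka i)) < d i" by metis
    let ?G = "\<Inter>i. Ka i"
    have Gint: "?G \<in> int_family (space M) E" by (rule int_family_INT) (rule Ka(1))
    have Gsub: "?G \<subseteq> space M - \<Union>(range A)" using Ka(2) by blast
    have "(space M - \<Union>(range A)) - ?G \<subseteq> (\<Union>i. (space M - A i) - Ka i)" by blast
    moreover have UM: "(\<Union>i. (space M - A i) - Ka i) \<in> sets M" using AM intsets Ka(1) by blast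
    ultimately have "measure P (evt P f ((space M - \<Union>(range A)) - ?G))
        \<le> measure P (evt P f (\<Union>i. (space M - A i) - Ka i))"
      by (rule h_mono)
    also have "\<dots> \<le> suminf d"
      using AM intsets Ka(1,3) ds by (intro h_UN) (auto intro: less_imp_le)
    finally have "measure P (evt P f ((space M - \<Union>(range A)) - ?G)) < e"
      using dsum e by simp
    thus "\<exists>F\<in>int_family (space M) E. F \<subseteq> space M - \<Union>(range A)
        \<and> measure P (evt P f ((space M - \<Union>(range A)) - F)) < e"
      using Gint Gsub by blast
  qed
  thus ?case .
  }
qed

lemma count_in_zero: "count_in B X = 0 \<longleftrightarrow> B \<inter> X = {}"
  unfolding count_in_def by (auto simp: zero_enat_def card_eq_0_iff)

lemma C_sigma_gen: "{{X \<in> countable_subsets (space M). count_in A X \<in> C} | A C. A \<in> sets M}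
     \<subseteq> Pow (countable_subsets (space M))" by blast

lemma space_C_sigma: "space (C_sigma M) = countable_subsets (space M)"
  unfolding C_sigma_def by (rule space_measure_of_conv)

lemma cr_event:
  assumes "cr_set P M g" "B \<in> sets M"
  shows "{\<omega>\<in>space P. g \<omega> \<inter> B \<noteq> {}} \<in> sets P"
proof -
  let ?Y = "{X \<in> countable_subsets (space M). count_in B X \<in> - {0}}"
  have "?Y \<in> sets (C_sigma M)"
    unfolding C_sigma_def sets_measure_of[OF C_sigma_gen]
    by (rule sigma_sets.Basic) (use assms(2) in blast)
  hence "g -` ?Y \<inter> space P \<in> sets P"
    using assms(1) unfolding cr_set_def by (rule measurable_sets[rotated])
  moreover have "g -` ?Y \<inter> space P = {\<omega>\<in>space P. g \<omega> \<inter> B \<noteq> {}}"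
  proof -
    have "\<And>\<omega>. \<omega> \<in> space P \<Longrightarrow> g \<omega> \<in> countable_subsets (space M)"
      using assms(1) unfolding cr_set_def 
      using measurable_space space_C_sigma by metis
    thus ?thesis using count_in_zero by (auto simp: Int_commute)
  qed
  ultimately show ?thesis by simp
qed

theorem theorem5p7:
  fixes P :: "'w measure" and M :: "'a measure" and E :: "'a set set"
    and \<pi> :: "'w \<Rightarrow> 'a set"
  assumes "prob_space P"
    and "E \<subseteq> Pow (space M)"
    and "\<And>A B. A \<in> E \<Longrightarrow> B \<in> E \<Longrightarrow> A \<inter> B \<in> E"
    and "sigma_sets (space M) E = sets M"
    and "{} \<in> E"
    and "E \<subseteq> sigma_family (int_family (space M) E)"
    and "cr_set P M \<pi>"
    and "constructive P M \<pi>"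
  shows "\<forall>A \<in> sets M. hitting P \<pi> A =
           Sup (hitting P \<pi> ` {F \<in> int_family (space M) E. F \<subseteq> A})"
proof
  fix A assume A: "A \<in> sets M"
  interpret prob_space P by fact
  obtain \<pi>s :: "nat \<Rightarrow> 'w \<Rightarrow> 'a set" where \<pi>s: "\<And>k. finite_cr_set P M (\<pi>s k)"
    "\<And>\<omega>. \<omega> \<in> space P \<Longrightarrow> \<pi> \<omega> = (\<Union>k. \<pi>s k \<omega>)"
    using assms(8) unfolding constructive_def by metis
  define fN where "fN N \<omega> = (\<Union>k\<le>N. \<pi>s k \<omega>)" for N \<omega>
  have Esub: "E \<subseteq> sets M" using assms(4) sigma_sets.Basic by blast
  have intsets: "\<And>F. F \<in> int_family (space M) E \<Longrightarrow> F \<in> sets M"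
    using int_family_sets[OF Esub] by blast
  have hit: "\<And>X. hitting P \<pi> X = measure P (evt P \<pi> X)"
    unfolding hitting_def evt_def by simp
  have evtM: "\<And>X. X \<in> sets M \<Longrightarrow> evt P \<pi> X \<in> sets P"
    unfolding evt_def using cr_event[OF assms(7)] by blast
  have setN: "setting P M (fN N)" for N
  proof (rule setting.intro)
    show "prob_space P" by fact
    show "finite (fN N \<omega>)" if "\<omega> \<in> space P" for \<omega>
      unfolding fN_def using \<pi>s(1) that unfolding finite_cr_set_def by blast
    show "evt P (fN N) B \<in> sets P" if B: "B \<in> sets M" for B
    proof -
      have "evt P (fN N) B = (\<Union>k\<le>N. {\<omega>\<in>space P. \<pi>s k \<omega> \<inter> B \<noteq> {}})"
        unfolding evt_def fN_def by blast
      moreover have "\<And>k. {\<omega>\<in>space P. \<pi>s k \<omega> \<inter> B \<noteq> {}} \<in> sets P"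
        using cr_event[OF _ B] \<pi>s(1) unfolding finite_cr_set_def by blast
      ultimately show ?thesis by auto
    qed
  qed
  have AS: "A \<in> sigma_sets (space M) E" using A assms(4) by simp
  have appr: "approx P (fN N) (space M) E A" for N
    using setting.inner[OF setN assms(2,3,4,5,6) AS] by blast
  let ?S = "hitting P \<pi> ` {F \<in> int_family (space M) E. F \<subseteq> A}"
  have ne: "?S \<noteq> {}" using int_family_empty[OF assms(5,6)] by blast
  have ub: "x \<le> hitting P \<pi> A" if xS: "x \<in> ?S" for x
  proof -
    obtain F where F: "F \<in> int_family (space M) E" "F \<subseteq> A" "x = hitting P \<pi> F"
      using xS by blast
    show ?thesis unfolding F(3) hit
      by (rule finite_measure_mono[OF evt_mono[OF F(2)] evtM[OF A]])
  qed
  show "hitting P \<pi> A = Sup ?S"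
  proof (rule cSup_eq_non_empty[symmetric, OF ne ub])
    fix y assume y: "\<And>x. x \<in> ?S \<Longrightarrow> x \<le> y"
    show "hitting P \<pi> A \<le> y"
    proof (rule ccontr)
      assume "\<not> hitting P \<pi> A \<le> y"
      define e where "e = hitting P \<pi> A - y"
      have e: "e > 0" using \<open>\<not> hitting P \<pi> A \<le> y\<close> unfolding e_def by simp
      have incs: "incseq (\<lambda>N. evt P (fN N) A)"
        unfolding incseq_def
      proof (intro allI impI)
        fix m n :: nat assume mn: "m \<le> n"
        hence "fN m \<omega> \<subseteq> fN n \<omega>" for \<omega> unfolding fN_def
          by (intro UN_mono) auto
        thus "evt P (fN m) A \<subseteq> evt P (fN n) A" unfolding evt_def by blast
      qed
      have rng: "range (\<lambda>N. evt P (fN N) A) \<subseteq> sets P"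
        using setting.meas[OF setN A] by blast
      have Ueq: "(\<Union>N. evt P (fN N) A) = evt P \<pi> A"
      proof
        show "(\<Union>N. evt P (fN N) A) \<subseteq> evt P \<pi> A" unfolding evt_def fN_def using \<pi>s(2) by blast
        show "evt P \<pi> A \<subseteq> (\<Union>N. evt P (fN N) A)"
        proof
          fix \<omega> assume "\<omega> \<in> evt P \<pi> A"
          then obtain x k where "\<omega> \<in> space P" "x \<in> A" "x \<in> \<pi>s k \<omega>"
            unfolding evt_def using \<pi>s(2) by blast
          hence "\<omega> \<in> evt P (fN k) A" unfolding evt_def fN_def by blast
          thus "\<omega> \<in> (\<Union>N. evt P (fN N) A)" by blast
        qed
      qed
      have "(\<lambda>N. measure P (evt P (fN N) A)) \<longlonglongrightarrow> hitting P \<pi> A"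
        using finite_Lim_measure_incseq[OF rng incs] unfolding Ueq hit .
      moreover have "hitting P \<pi> A - e / 2 < hitting P \<pi> A" using e by simp
      ultimately have "eventually (\<lambda>N. hitting P \<pi> A - e / 2 < measure P (evt P (fN N) A)) sequentially"
        by (rule order_tendstoD(1))
      then obtain N where N: "hitting P \<pi> A - e / 2 < measure P (evt P (fN N) A)"
        by (auto simp: eventually_sequentially)
      have "e / 2 > 0" using e by simp
      then obtain F where F: "F \<in> int_family (space M) E" "F \<subseteq> A"
          "measure P (evt P (fN N) (A - F)) < e / 2"
        using appr[of N] unfolding approx_def by blast
      have FM: "F \<in> sets M" using intsets F(1) .
      have sub: "evt P (fN N) A \<subseteq> evt P (fN N) (A - F) \<union> evt P \<pi> F"
        unfolding evt_def fN_def using \<pi>s(2) by blast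
      have "measure P (evt P (fN N) A) \<le> measure P (evt P (fN N) (A - F) \<union> evt P \<pi> F)"
        using setting.meas[OF setN] A FM evtM
        by (intro finite_measure_mono[OF sub]) auto
      also have "\<dots> \<le> measure P (evt P (fN N) (A - F)) + measure P (evt P \<pi> F)"
        using setting.meas[OF setN] A FM evtM by (intro measure_Un_le) auto
      finally have "hitting P \<pi> A - e < hitting P \<pi> F"
        using N F(3) hit by simp
      moreover have "hitting P \<pi> F \<le> y" using y F(1,2) by blast
      ultimately show False unfolding e_def by simp
    qed
  qed
qed

end
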